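(* Let $X$ be an infinite dimensional real Banach space. Then there exists a closed, bounded, convex set $K\subset X$ that is not remotal.
   Context: For a bounded set $C$ in a Banach space $Z$ and $z\in Z$, let $D(z,C)=\sup\{\|z-c\|: c\in C\}$. $C$ is remotal from $z$ if there exists $c_0\in C$ with $\|z-c_0\|=D(z,C)$; $C$ is remotal if it is remotal from every point of $Z$. *)

theory Defs
  imports "HOL-Analysis.Analysis"
begin

definition farthest_dist :: "'a::real_normed_vector \<Rightarrow> 'a set \<Rightarrow> real" where
  "farthest_dist z C = (SUP c\<in>C. norm (z - c))"

definition remotal_from :: "'a::real_normed_vector \<Rightarrow> 'a set \<Rightarrow> bool" where
  "remotal_from z C \<longleftrightarrow> (\<exists>c0\<in>C. norm (z - c0) = farthest_dist z C)"

definition remotal :: "'a::real_normed_vector set \<Rightarrow> bool" where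
  "remotal C \<longleftrightarrow> (\<forall>z. remotal_from z C)"

definition infinite_dimensional :: "'a::real_vector itself \<Rightarrow> bool" where
  "infinite_dimensional TYPE('a) \<longleftrightarrow> \<not> (\<exists>B::'a set. finite B \<and> span B = UNIV)"

end

theory Submission
  imports Defs
begin


definition lf :: "('a::real_normed_vector \<Rightarrow> real) \<Rightarrow> bool" where
  "lf f \<longleftrightarrow> (\<forall>a b. f (a+b) = f a + f b) \<and> (\<forall>c a. f (c *\<^sub>R a) = c * f a) \<and> (\<forall>z. \<bar>f z\<bar> \<le> norm z)"

definition hbG :: "'a::real_normed_vector \<Rightarrow> ('a \<times> real) set set" where
  "hbG x0 = {G. (x0, norm x0) \<in> G \<and> (\<forall>p\<in>G. \<forall>q\<in>G. (fst p + fst q, snd p + snd q) \<in> G)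
     \<and> (\<forall>p\<in>G. \<forall>c. (c *\<^sub>R fst p, c * snd p) \<in> G) \<and> (\<forall>p\<in>G. snd p \<le> norm (fst p))}"

lemma hbG_chain:
  fixes x0 :: "'a::real_normed_vector"
  assumes "C \<in> chains (hbG x0)"
  shows "\<exists>U\<in>hbG x0. \<forall>X\<in>C. X \<subseteq> U"
proof (cases "C = {}")
  case True
  let ?G = "{(c *\<^sub>R x0, c * norm x0) | c. True}"
  have "?G \<in> hbG x0"
    unfolding hbG_def
  proof (rule CollectI, intro conjI ballI allI)
    have "(x0, norm x0) = (1 *\<^sub>R x0, 1 * norm x0)" by simp
    then show "(x0, norm x0) \<in> ?G" by blast
  next
    fix p q assume "p \<in> ?G" "q \<in> ?G"
    then obtain c d where "p = (c *\<^sub>R x0, c * norm x0)" "q = (d *\<^sub>R x0, d * norm x0)" by blast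
    then show "(fst p + fst q, snd p + snd q) \<in> ?G"
      by (auto intro!: exI[of _ "c+d"] simp: algebra_simps)
  next
    fix p c assume "p \<in> ?G"
    then obtain d where "p = (d *\<^sub>R x0, d * norm x0)" by blast
    then show "(c *\<^sub>R fst p, c * snd p) \<in> ?G"
      by (auto intro!: exI[of _ "c*d"] simp: algebra_simps)
  next
    fix p assume "p \<in> ?G"
    then obtain d where "p = (d *\<^sub>R x0, d * norm x0)" by blast
    then show "snd p \<le> norm (fst p)" by (simp add: mult_right_mono)
  qed
  then show ?thesis using True by blast
next
  case False
  have sub: "C \<subseteq> hbG x0" and ch: "\<And>A B. A \<in> C \<Longrightarrow> B \<in> C \<Longrightarrow> A \<subseteq> B \<or> B \<subseteq> A"
    using assms unfolding chains_def chain_subset_def by auto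
  have "\<Union>C \<in> hbG x0"
    unfolding hbG_def
  proof (intro CollectI conjI ballI allI)
    from False obtain A where "A \<in> C" by blast
    then show "(x0, norm x0) \<in> \<Union>C" using sub unfolding hbG_def by blast
  next
    fix p q assume "p \<in> \<Union>C" "q \<in> \<Union>C"
    then obtain A B where AB: "A \<in> C" "B \<in> C" "p \<in> A" "q \<in> B" by blast
    show "(fst p + fst q, snd p + snd q) \<in> \<Union>C"
    proof (cases "A \<subseteq> B")
      case True
      then show ?thesis using AB sub unfolding hbG_def by blast
    next
      case False
      then have "B \<subseteq> A" using ch AB by blast
      then show ?thesis using AB sub unfolding hbG_def by blast
    qed
  next
    fix p c assume "p \<in> \<Union>C"
    then show "(c *\<^sub>R fst p, c * snd p) \<in> \<Union>C" using sub unfolding hbG_def by blast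
  next
    fix p assume "p \<in> \<Union>C"
    then show "snd p \<le> norm (fst p)" using sub unfolding hbG_def by blast
  qed
  then show ?thesis by blast
qed

lemma hbG_ext:
  fixes x0 :: "'a::real_normed_vector"
  assumes M: "M \<in> hbG x0" and y: "\<forall>u. (y,u) \<notin> M"
  shows "\<exists>M'\<in>hbG x0. M \<subseteq> M' \<and> M' \<noteq> M"
proof -
  have add: "\<And>s u t v. (s,u) \<in> M \<Longrightarrow> (t,v) \<in> M \<Longrightarrow> (s+t, u+v) \<in> M"
    using M unfolding hbG_def by force
  have scl: "\<And>s u c. (s,u) \<in> M \<Longrightarrow> (c *\<^sub>R s, c*u) \<in> M"
    using M unfolding hbG_def by force
  have dom: "\<And>s u. (s,u) \<in> M \<Longrightarrow> u \<le> norm s"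
    using M unfolding hbG_def by force
  have x0: "(x0, norm x0) \<in> M" using M unfolding hbG_def by blast
  have z: "(0,0) \<in> M" using scl[OF x0, of 0] by simp
  define A where "A = {u - norm (s - y) | s u. (s,u) \<in> M}"
  define c where "c = Sup A"
  have key: "\<And>s u t v. (s,u) \<in> M \<Longrightarrow> (t,v) \<in> M \<Longrightarrow> u - norm (s - y) \<le> norm (t + y) - v"
  proof -
    fix s u t v assume "(s,u) \<in> M" "(t,v) \<in> M"
    then have "u + v \<le> norm (s + t)" using add dom by blast
    also have "\<dots> \<le> norm (s - y) + norm (t + y)"
      using norm_triangle_ineq[of "s - y" "t + y"] by simp
    finally show "u - norm (s - y) \<le> norm (t + y) - v" by simp
  qed
  have Ane: "A \<noteq> {}" using z unfolding A_def by blast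
  have cup: "\<And>s u. (s,u) \<in> M \<Longrightarrow> u - norm (s - y) \<le> c"
    unfolding c_def
    apply (rule cSup_upper)
    subgoal unfolding A_def by blast
    subgoal unfolding A_def bdd_above_def using key z by blast
    done
  have clow: "\<And>t v. (t,v) \<in> M \<Longrightarrow> c \<le> norm (t + y) - v"
    unfolding c_def
    apply (rule cSup_least[OF Ane])
    unfolding A_def using key by blast
  define M' where "M' = {(s + a *\<^sub>R y, u + a * c) | s u a. (s,u) \<in> M}"
  have "M' \<in> hbG x0"
    unfolding hbG_def
  proof (intro CollectI conjI ballI allI)
    have "(x0, norm x0) = (x0 + 0 *\<^sub>R y, norm x0 + 0 * c)" by simp
    then show "(x0, norm x0) \<in> M'" unfolding M'_def using x0 by blast
  next
    fix p q assume "p \<in> M'" "q \<in> M'"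
    then obtain s u a t v b where "p = (s + a *\<^sub>R y, u + a * c)" "(s,u) \<in> M"
       "q = (t + b *\<^sub>R y, v + b * c)" "(t,v) \<in> M" unfolding M'_def by blast
    then have "(fst p + fst q, snd p + snd q) = ((s+t) + (a+b) *\<^sub>R y, (u+v) + (a+b) * c)"
      by (simp add: algebra_simps)
    moreover have "(s+t, u+v) \<in> M" using add \<open>(s,u) \<in> M\<close> \<open>(t,v) \<in> M\<close> by blast
    ultimately show "(fst p + fst q, snd p + snd q) \<in> M'"
      unfolding M'_def by blast
  next
    fix p d assume "p \<in> M'"
    then obtain s u a where "p = (s + a *\<^sub>R y, u + a * c)" "(s,u) \<in> M" unfolding M'_def by blast
    then have "(d *\<^sub>R fst p, d * snd p) = (d *\<^sub>R s + (d*a) *\<^sub>R y, d*u + (d*a) * c)"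
      by (simp add: algebra_simps)
    moreover have "(d *\<^sub>R s, d*u) \<in> M" using scl \<open>(s,u) \<in> M\<close> by blast
    ultimately show "(d *\<^sub>R fst p, d * snd p) \<in> M'"
      unfolding M'_def by blast
  next
    fix p assume "p \<in> M'"
    then obtain s u a where p: "p = (s + a *\<^sub>R y, u + a * c)" and su: "(s,u) \<in> M" unfolding M'_def by blast
    have "u + a * c \<le> norm (s + a *\<^sub>R y)"
    proof (cases a "0::real" rule: linorder_cases)
      case equal then show ?thesis using dom su by simp
    next
      case greater
      have "(inverse a *\<^sub>R s, inverse a * u) \<in> M" using scl su by blast
      then have "c \<le> norm (inverse a *\<^sub>R s + y) - inverse a * u" using clow by blast
      then have "a * c \<le> a * (norm (inverse a *\<^sub>R s + y) - inverse a * u)"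
        using greater by (simp add: mult_left_mono)
      also have "\<dots> = a * norm (inverse a *\<^sub>R s + y) - u"
        using greater by (simp add: right_diff_distrib)
      also have "a * norm (inverse a *\<^sub>R s + y) = norm (a *\<^sub>R (inverse a *\<^sub>R s + y))"
        using greater by simp
      also have "a *\<^sub>R (inverse a *\<^sub>R s + y) = s + a *\<^sub>R y"
        using greater by (simp add: algebra_simps)
      finally show ?thesis by simp
    next
      case less
      define b where "b = - a"
      have bp: "b > 0" using less b_def by simp
      have "(inverse b *\<^sub>R s, inverse b * u) \<in> M" using scl su by blast
      then have "inverse b * u - norm (inverse b *\<^sub>R s - y) \<le> c" using cup by blast
      then have h1: "b * (inverse b * u - norm (inverse b *\<^sub>R s - y)) \<le> b * c"
        using bp by (simp add: mult_left_mono)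
      have h2: "b * (inverse b * u - norm (inverse b *\<^sub>R s - y)) = u - b * norm (inverse b *\<^sub>R s - y)"
        using bp by (simp add: right_diff_distrib)
      have h3: "b * norm (inverse b *\<^sub>R s - y) = norm (b *\<^sub>R (inverse b *\<^sub>R s - y))"
        using bp by simp
      have h4: "b *\<^sub>R (inverse b *\<^sub>R s - y) = s + a *\<^sub>R y"
        using bp b_def by (simp add: algebra_simps)
      have h5: "norm (b *\<^sub>R (inverse b *\<^sub>R s - y)) = norm (s + a *\<^sub>R y)" using h4 by (rule arg_cong)
      have "u - norm (s + a *\<^sub>R y) \<le> b * c" using h1 h2 h3 h5 by linarith
      then show ?thesis using b_def by simp
    qed
    then show "snd p \<le> norm (fst p)" using p by simp
  qed
  moreover have "M \<subseteq> M'"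
  proof
    fix p assume "p \<in> M"
    obtain s u where su: "p = (s,u)" by (cases p)
    have "\<exists>s' u' a. p = (s' + a *\<^sub>R y, u' + a * c) \<and> (s',u') \<in> M"
      using su \<open>p \<in> M\<close> by (intro exI[of _ s] exI[of _ u] exI[of _ 0]) simp
    then show "p \<in> M'" unfolding M'_def by simp
  qed
  moreover have "(y, c) = (0 + 1 *\<^sub>R y, 0 + 1 * c)" by simp
  then have "(y, c) \<in> M'" unfolding M'_def using z by blast
  moreover
  ultimately show ?thesis using y by blast
qed

lemma hahn_banach:
  fixes x0 :: "'a::real_normed_vector"
  shows "\<exists>f. lf f \<and> f x0 = norm x0"
proof -
  obtain M where M: "M \<in> hbG x0" and max: "\<forall>X\<in>hbG x0. M \<subseteq> X \<longrightarrow> X = M"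
    using Zorn_Lemma2[of "hbG x0"] hbG_chain by blast
  have tot: "\<forall>y. \<exists>u. (y,u) \<in> M"
    using hbG_ext[OF M] max by blast
  have add: "\<And>s u t v. (s,u) \<in> M \<Longrightarrow> (t,v) \<in> M \<Longrightarrow> (s+t, u+v) \<in> M"
    using M unfolding hbG_def by force
  have scl: "\<And>s u c. (s,u) \<in> M \<Longrightarrow> (c *\<^sub>R s, c*u) \<in> M"
    using M unfolding hbG_def by force
  have dom: "\<And>s u. (s,u) \<in> M \<Longrightarrow> u \<le> norm s"
    using M unfolding hbG_def by force
  have x0: "(x0, norm x0) \<in> M" using M unfolding hbG_def by blast
  have uniq: "\<And>s u v. (s,u) \<in> M \<Longrightarrow> (s,v) \<in> M \<Longrightarrow> u = v"
  proof -
    fix s u v assume a: "(s,u) \<in> M" "(s,v) \<in> M"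
    have "(s + (-1) *\<^sub>R s, u + (-1) * v) \<in> M" using add[OF a(1) scl[OF a(2)]] .
    then have "u - v \<le> 0" using dom by fastforce
    have "(s + (-1) *\<^sub>R s, v + (-1) * u) \<in> M" using add[OF a(2) scl[OF a(1)]] .
    then have "v - u \<le> 0" using dom by fastforce
    then show "u = v" using \<open>u - v \<le> 0\<close> by simp
  qed
  define f where "f y = (SOME u. (y,u) \<in> M)" for y
  have fM: "\<And>y. (y, f y) \<in> M" unfolding f_def using tot by (metis someI_ex)
  have fe: "\<And>y u. (y,u) \<in> M \<Longrightarrow> f y = u" using fM uniq by blast
  have "lf f" unfolding lf_def
  proof (intro conjI allI)
    fix a b show "f (a + b) = f a + f b" using fe add fM by blast
  next
    fix c a show "f (c *\<^sub>R a) = c * f a" using fe scl fM by blast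
  next
    fix z
    have "f z \<le> norm z" using dom fM by blast
    moreover have "f ((-1) *\<^sub>R z) = - f z" using fe scl fM by fastforce
    moreover have "f ((-1) *\<^sub>R z) \<le> norm z" using dom fM by (metis norm_minus_cancel scaleR_minus1_left)
    ultimately show "\<bar>f z\<bar> \<le> norm z" by simp
  qed
  moreover have "f x0 = norm x0" using fe x0 by blast
  ultimately show ?thesis by blast
qed



lemma lf_basic:
  assumes "lf f"
  shows "f 0 = 0" "f (a - b) = f a - f b" "f (c *\<^sub>R a) = c * f a" "f (a + b) = f a + f b"
    "\<bar>f z\<bar> \<le> norm z"
proof -
  have add: "\<And>a b. f (a+b) = f a + f b" and scl: "\<And>c a. f (c *\<^sub>R a) = c * f a"
    and bd: "\<And>z. \<bar>f z\<bar> \<le> norm z" using assms unfolding lf_def by auto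
  show "f 0 = 0" using scl[of 0 0] by simp
  have "f (a - b) = f (a + (-1) *\<^sub>R b)" by simp
  also have "\<dots> = f a + f ((-1) *\<^sub>R b)" by (rule add)
  also have "\<dots> = f a - f b" using scl[of "-1" b] by simp
  finally show "f (a - b) = f a - f b" .
  show "f (c *\<^sub>R a) = c * f a" "f (a + b) = f a + f b" "\<bar>f z\<bar> \<le> norm z" using add scl bd by auto
qed

lemma lf_sum:
  assumes "lf f"
  shows "f (\<Sum>i\<in>I. g i) = (\<Sum>i\<in>I. f (g i))"
proof (induction I rule: infinite_finite_induct)
  case (infinite A) then show ?case using lf_basic[OF assms] by simp
next
  case empty then show ?case using lf_basic[OF assms] by simp
next
  case (insert x F) then show ?case using lf_basic[OF assms] by simp
qed

lemma kern_aux: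
  fixes \<Phi> :: "('a::real_normed_vector \<Rightarrow> real) set"
  assumes inf: "infinite_dimensional TYPE('a)" and fin: "finite \<Phi>" and lfs: "\<forall>f\<in>\<Phi>. lf f"
  shows "\<forall>B. finite B \<longrightarrow> \<not> {x. \<forall>f\<in>\<Phi>. f x = 0} \<subseteq> span B"
  using fin lfs
proof (induction \<Phi> rule: finite_induct)
  case empty
  then show ?case using inf unfolding infinite_dimensional_def by auto
next
  case (insert g \<Phi>)
  show ?case
  proof (intro allI impI notI)
    fix B :: "'a set" assume B: "finite B" and sub: "{x. \<forall>f\<in>insert g \<Phi>. f x = 0} \<subseteq> span B"
    let ?W = "{x. \<forall>f\<in>\<Phi>. f x = 0}"
    have IH: "\<forall>B. finite B \<longrightarrow> \<not> ?W \<subseteq> span B" using insert by auto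
    show False
    proof (cases "\<forall>w\<in>?W. g w = 0")
      case True
      then have "?W \<subseteq> span B" using sub by auto
      then show False using IH B by blast
    next
      case False
      then obtain w0 where w0: "w0 \<in> ?W" "g w0 \<noteq> 0" by blast
      have lg: "lf g" using insert by auto
      have "?W \<subseteq> span (insert w0 B)"
      proof
        fix w assume w: "w \<in> ?W"
        let ?k = "g w / g w0"
        have "w - ?k *\<^sub>R w0 \<in> {x. \<forall>f\<in>insert g \<Phi>. f x = 0}"
        proof (simp, intro conjI ballI)
          show "g (w - ?k *\<^sub>R w0) = 0" using lf_basic[OF lg] w0 by simp
        next
          fix f assume "f \<in> \<Phi>"
          then have "lf f" using insert by auto
          have "f w = 0" "f w0 = 0" using w w0 \<open>f \<in> \<Phi>\<close> by auto
          then show "f (w - ?k *\<^sub>R w0) = 0" using lf_basic[OF \<open>lf f\<close>] by simp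
        qed
        then have "w - ?k *\<^sub>R w0 \<in> span B" using sub by blast
        then show "w \<in> span (insert w0 B)" using span_breakdown_eq by blast
      qed
      then show False using IH B by blast
    qed
  qed
qed

lemma kern:
  fixes \<Phi> :: "('a::real_normed_vector \<Rightarrow> real) set"
  assumes inf: "infinite_dimensional TYPE('a)" and fin: "finite \<Phi>" and lfs: "\<forall>f\<in>\<Phi>. lf f"
  shows "\<exists>x::'a. x \<noteq> 0 \<and> (\<forall>f\<in>\<Phi>. f x = 0)"
  using kern_aux[OF assms, rule_format, of "{}"] by auto



definition Inv :: "nat \<Rightarrow> (nat \<Rightarrow> 'a::real_normed_vector) \<Rightarrow> ('a \<Rightarrow> real) set \<Rightarrow> bool" where
  "Inv n x \<Phi> \<longleftrightarrow> finite \<Phi> \<and> (\<forall>f\<in>\<Phi>. lf f) \<and> (\<forall>i<n. norm (x i) = 1)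
     \<and> (\<forall>u\<in>span (x ` {..<n}). u \<noteq> 0 \<longrightarrow> (\<exists>f\<in>\<Phi>. norm u \<le> 2 * \<bar>f u\<bar>))
     \<and> compact {u \<in> span (x ` {..<n}). norm u \<le> 1}"

lemma Inv0: "Inv 0 x {}"
proof -
  have "{u \<in> span (x ` {..<0}). norm u \<le> 1} = {0}" by auto
  then show ?thesis unfolding Inv_def by simp
qed

lemma Inv_step:
  fixes x :: "nat \<Rightarrow> 'a::real_normed_vector"
  assumes inf: "infinite_dimensional TYPE('a)" and I: "Inv n x \<Phi>"
  shows "\<exists>x' \<Phi>'. Inv (Suc n) x' \<Phi>' \<and> (\<forall>i<n. x' i = x i) \<and> \<Phi> \<subseteq> \<Phi>' \<and> (\<forall>f\<in>\<Phi>. f (x' n) = 0)"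
proof -
  have fin: "finite \<Phi>" and lfs: "\<forall>f\<in>\<Phi>. lf f" and un: "\<forall>i<n. norm (x i) = 1"
    and nrm: "\<forall>u\<in>span (x ` {..<n}). u \<noteq> 0 \<longrightarrow> (\<exists>f\<in>\<Phi>. norm u \<le> 2 * \<bar>f u\<bar>)"
    and cpt: "compact {u \<in> span (x ` {..<n}). norm u \<le> 1}"
    using I unfolding Inv_def by auto
  obtain z :: 'a where z: "z \<noteq> 0" "\<forall>f\<in>\<Phi>. f z = 0" using kern[OF inf fin lfs] by blast
  define v where "v = z /\<^sub>R norm z"
  have vn: "norm v = 1" using z unfolding v_def by simp
  have fv: "\<forall>f\<in>\<Phi>. f v = 0" using z lfs lf_basic(3) unfolding v_def by fastforce
  define x' where "x' = x(n := v)"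
  define E where "E = span (x ` {..<n})"
  have img: "x' ` {..<Suc n} = insert v (x ` {..<n})"
    unfolding x'_def lessThan_Suc by auto
  have E': "span (x' ` {..<Suc n}) = span (insert v (x ` {..<n}))" using img by simp
  have A: "\<And>e t. e \<in> E \<Longrightarrow> norm e \<le> 2 * norm (e + t *\<^sub>R v)"
  proof -
    fix e t assume e: "e \<in> E"
    show "norm e \<le> 2 * norm (e + t *\<^sub>R v)"
    proof (cases "e = 0")
      case True then show ?thesis by simp
    next
      case False
      then obtain f where f: "f \<in> \<Phi>" "norm e \<le> 2 * \<bar>f e\<bar>" using nrm e unfolding E_def by blast
      have lf: "lf f" using lfs f by blast
      have "f (e + t *\<^sub>R v) = f e" using lf_basic[OF lf] fv f by simp
      moreover have "\<bar>f (e + t *\<^sub>R v)\<bar> \<le> norm (e + t *\<^sub>R v)" using lf_basic[OF lf] by blast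
      ultimately show ?thesis using f by linarith
    qed
  qed
  define B where "B = {u \<in> E. norm u \<le> 1}"
  have cB: "compact B" using cpt unfolding B_def E_def .
  define h where "h = (\<lambda>p::'a \<times> real. 2 *\<^sub>R fst p + snd p *\<^sub>R v)"
  define B' where "B' = {u \<in> span (insert v (x ` {..<n})). norm u \<le> 1}"
  have B'eq: "B' = h ` (B \<times> {-3..3}) \<inter> cball 0 1"
  proof
    show "B' \<subseteq> h ` (B \<times> {-3..3}) \<inter> cball 0 1"
    proof
      fix u assume u: "u \<in> B'"
      then obtain k where k: "u - k *\<^sub>R v \<in> E" using span_breakdown_eq unfolding B'_def E_def by blast
      define e where "e = u - k *\<^sub>R v"
      have ue: "u = e + k *\<^sub>R v" unfolding e_def by simp
      have ne: "norm e \<le> 2" using A[OF k, of k] u unfolding B'_def e_def by simp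
      have "norm (k *\<^sub>R v) \<le> norm u + norm e" using ue norm_triangle_ineq4[of u e] by simp
      then have "\<bar>k\<bar> \<le> 3" using vn ne u unfolding B'_def by simp
      moreover have "(1/2) *\<^sub>R e \<in> B" unfolding B_def using k ne e_def span_scale[of e] 
        by (auto simp: E_def span_scale)
      moreover have "u = h ((1/2) *\<^sub>R e, k)" unfolding h_def using ue by simp
      ultimately show "u \<in> h ` (B \<times> {-3..3}) \<inter> cball 0 1" using u unfolding B'_def by force
    qed
  next
    show "h ` (B \<times> {-3..3}) \<inter> cball 0 1 \<subseteq> B'"
    proof
      fix u assume u: "u \<in> h ` (B \<times> {-3..3}) \<inter> cball 0 1"
      then obtain e t where et: "e \<in> B" "u = 2 *\<^sub>R e + t *\<^sub>R v" unfolding h_def by force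
      have "e \<in> span (insert v (x ` {..<n}))" using et span_mono[of "x ` {..<n}" "insert v (x ` {..<n})"]
        unfolding B_def E_def by blast
      then have "u \<in> span (insert v (x ` {..<n}))" using et
        by (simp add: span_add span_scale span_base)
      then show "u \<in> B'" using u unfolding B'_def by simp
    qed
  qed
  have cB': "compact B'"
    unfolding B'eq
  proof (rule compact_Int_closed)
    show "compact (h ` (B \<times> {-3..3}))"
      apply (rule compact_continuous_image)
      subgoal unfolding h_def by (intro continuous_intros)
      subgoal using cB by (intro compact_Times) auto
      done
  qed simp
  define S where "S = B' \<inter> sphere 0 1"
  have "sphere (0::'a) 1 = {u. norm u = 1}" by auto
  moreover have "closed {u::'a. norm u = 1}" by (intro closed_Collect_eq continuous_intros)
  ultimately have "closed (sphere (0::'a) 1)" by simp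
  then have cS: "compact S" unfolding S_def using cB' by (intro compact_Int_closed)
  obtain C where C: "C \<subseteq> S" "finite C" "S \<subseteq> (\<Union>c\<in>C. ball c (1/2))"
  proof -
    have "S \<subseteq> (\<Union>c\<in>S. ball c (1/2))" by force
    then show ?thesis using compactE_image[OF cS, of S "\<lambda>c. ball c (1/2)"] that by auto
  qed
  obtain hb :: "'a \<Rightarrow> 'a \<Rightarrow> real" where hb: "\<And>w. lf (hb w) \<and> hb w w = norm w"
    using hahn_banach by metis
  define \<Phi>' where "\<Phi>' = \<Phi> \<union> hb ` C"
  have "Inv (Suc n) x' \<Phi>'"
    unfolding Inv_def
  proof (intro conjI)
    show "finite \<Phi>'" unfolding \<Phi>'_def using fin C by simp
    show "\<forall>f\<in>\<Phi>'. lf f" unfolding \<Phi>'_def using lfs hb by auto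
    show "\<forall>i<Suc n. norm (x' i) = 1" unfolding x'_def using un vn by (auto simp: less_Suc_eq)
    show "compact {u \<in> span (x' ` {..<Suc n}). norm u \<le> 1}" using cB' unfolding E' B'_def .
    show "\<forall>u\<in>span (x' ` {..<Suc n}). u \<noteq> 0 \<longrightarrow> (\<exists>f\<in>\<Phi>'. norm u \<le> 2 * \<bar>f u\<bar>)"
    proof (intro ballI impI)
      fix u assume u: "u \<in> span (x' ` {..<Suc n})" and u0: "u \<noteq> 0"
      define w where "w = u /\<^sub>R norm u"
      have "w \<in> S" unfolding S_def B'_def w_def using u u0 E' by (simp add: span_scale)
      then obtain e where e: "e \<in> C" "w \<in> ball e (1/2)" using C by blast
      have eS: "norm e = 1" using e C unfolding S_def by auto
      have lf: "lf (hb e)" using hb by blast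
      have "hb e w = hb e e + hb e (w - e)" using lf_basic(4)[OF lf, of e "w - e"] by simp
      moreover have "\<bar>hb e (w - e)\<bar> \<le> norm (w - e)" using lf_basic(5)[OF lf] by blast
      moreover have "norm (w - e) < 1/2" using e by (simp add: dist_norm norm_minus_commute)
      ultimately have "hb e w \<ge> 1/2" using hb eS by fastforce
      moreover have "hb e u = norm u * hb e w"
        using lf_basic(3)[OF lf, of "norm u" w] u0 unfolding w_def by simp
      ultimately have "norm u \<le> 2 * hb e u"
        using mult_left_mono[of "1/2" "hb e w" "norm u"] by simp
      then show "\<exists>f\<in>\<Phi>'. norm u \<le> 2 * \<bar>f u\<bar>" unfolding \<Phi>'_def using e by force
    qed
  qed
  moreover have "\<forall>i<n. x' i = x i" unfolding x'_def by simp
  moreover have "\<forall>f\<in>\<Phi>. f (x' n) = 0" unfolding x'_def using fv by simp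
  ultimately show ?thesis unfolding \<Phi>'_def by blast
qed



lemma basic_seq:
  assumes inf: "infinite_dimensional TYPE('a::real_normed_vector)"
  shows "\<exists>X::nat \<Rightarrow> 'a. (\<forall>i. norm (X i) = 1) \<and>
    (\<forall>M N c. M \<le> N \<longrightarrow> norm (\<Sum>i<M. c i *\<^sub>R X i) \<le> 2 * norm (\<Sum>i<N. c i *\<^sub>R X i))"
proof -
  obtain F :: "nat \<Rightarrow> (nat \<Rightarrow> 'a) \<times> ('a \<Rightarrow> real) set" where
    F: "\<forall>n. Inv n (fst (F n)) (snd (F n)) \<and>
      ((\<forall>i<n. fst (F (Suc n)) i = fst (F n) i) \<and> snd (F n) \<subseteq> snd (F (Suc n))
        \<and> (\<forall>f\<in>snd (F n). f (fst (F (Suc n)) n) = 0))"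
  proof -
    define P where "P = (\<lambda>n (p::(nat \<Rightarrow> 'a) \<times> ('a \<Rightarrow> real) set). Inv n (fst p) (snd p))"
    define Q where "Q = (\<lambda>n (p::(nat \<Rightarrow> 'a) \<times> ('a \<Rightarrow> real) set) p'. (\<forall>i<n. fst p' i = fst p i) \<and> snd p \<subseteq> snd p' \<and> (\<forall>f\<in>snd p. f (fst p' n) = 0))"
    have h1: "\<exists>p. P 0 p"
      unfolding P_def using Inv0[of "\<lambda>_. 0"] by (intro exI[of _ "(\<lambda>_. 0, {})"]) simp
    have h2: "\<exists>q. P (Suc n) q \<and> Q n p q" if "P n p" for p n
    proof -
      from that have "Inv n (fst p) (snd p)" unfolding P_def by simp
      then obtain x' \<Phi>' where "Inv (Suc n) x' \<Phi>'" "\<forall>i<n. x' i = fst p i" "snd p \<subseteq> \<Phi>'"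
        "\<forall>f\<in>snd p. f (x' n) = 0" using Inv_step[OF inf] by blast
      then show ?thesis unfolding P_def Q_def by (intro exI[of _ "(x', \<Phi>')"]) simp
    qed
    obtain F where "\<forall>n. P n (F n) \<and> Q n (F n) (F (Suc n))"
      using dependent_nat_choice[of P Q, OF h1 h2] by blast
    then show ?thesis using that unfolding P_def Q_def by blast
  qed
  define X where "X i = fst (F (Suc i)) i" for i
  have L1: "\<And>m i. i < m \<Longrightarrow> fst (F m) i = X i"
  proof -
    fix m i show "i < m \<Longrightarrow> fst (F m) i = X i"
    proof (induction m)
      case 0 then show ?case by simp
    next
      case (Suc m)
      show ?case
      proof (cases "i < m")
        case True then show ?thesis using Suc F by simp
      next
        case False then have "i = m" using Suc by simp
        then show ?thesis unfolding X_def by simp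
      qed
    qed
  qed
  have L2: "\<And>k m. k \<le> m \<Longrightarrow> snd (F k) \<subseteq> snd (F m)"
  proof -
    fix k m :: nat assume "k \<le> m"
    then show "snd (F k) \<subseteq> snd (F m)"
    proof (induction m)
      case 0 then show ?case by simp
    next
      case (Suc m)
      then show ?case using F by (metis le_Suc_eq order_trans subset_refl)
    qed
  qed
  have L3: "\<And>M i f. M \<le> i \<Longrightarrow> f \<in> snd (F M) \<Longrightarrow> f (X i) = 0"
  proof -
    fix M i f assume "M \<le> i" "f \<in> snd (F M)"
    then have "f \<in> snd (F i)" using L2 by blast
    moreover have "\<forall>f\<in>snd (F i). f (fst (F (Suc i)) i) = 0" using F by blast
    ultimately show "f (X i) = 0" unfolding X_def by blast
  qed
  have spanEq: "\<And>M. span (fst (F M) ` {..<M}) = span (X ` {..<M})"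
  proof -
    fix M
    have "fst (F M) ` {..<M} = X ` {..<M}" by (rule image_cong) (auto simp: L1)
    then show "span (fst (F M) ` {..<M}) = span (X ` {..<M})" by simp
  qed
  have unit: "\<forall>i. norm (X i) = 1"
  proof
    fix i
    have "Inv (Suc i) (fst (F (Suc i))) (snd (F (Suc i)))" using F by blast
    then have "\<forall>j<Suc i. norm (fst (F (Suc i)) j) = 1" unfolding Inv_def by blast
    then show "norm (X i) = 1" unfolding X_def by simp
  qed
  have trunc: "\<forall>M N c. M \<le> N \<longrightarrow> norm (\<Sum>i<M. c i *\<^sub>R X i) \<le> 2 * norm (\<Sum>i<N. c i *\<^sub>R X i)"
  proof (intro allI impI)
    fix M N :: nat and c :: "nat \<Rightarrow> real" assume MN: "M \<le> N"
    define e where "e = (\<Sum>i<M. c i *\<^sub>R X i)"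
    define r where "r = (\<Sum>i\<in>{M..<N}. c i *\<^sub>R X i)"
    have split: "(\<Sum>i<N. c i *\<^sub>R X i) = e + r"
    proof -
      have "{..<N} = {..<M} \<union> {M..<N}" using MN by auto
      moreover have "(\<Sum>i\<in>{..<M} \<union> {M..<N}. c i *\<^sub>R X i) = (\<Sum>i<M. c i *\<^sub>R X i) + (\<Sum>i\<in>{M..<N}. c i *\<^sub>R X i)"
        by (rule sum.union_disjoint) auto
      ultimately show ?thesis unfolding e_def r_def by simp
    qed
    have eS: "e \<in> span (fst (F M) ` {..<M})" unfolding spanEq e_def
      by (intro span_sum span_scale span_base) auto
    show "norm e \<le> 2 * norm (\<Sum>i<N. c i *\<^sub>R X i)"
    proof (cases "e = 0")
      case True then show ?thesis by simp
    next
      case False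
      have IM: "Inv M (fst (F M)) (snd (F M))" using F by blast
      then obtain f where f: "f \<in> snd (F M)" "norm e \<le> 2 * \<bar>f e\<bar>"
        using eS False unfolding Inv_def by blast
      have lf: "lf f" using IM f unfolding Inv_def by blast
      have "f r = (\<Sum>i\<in>{M..<N}. c i * f (X i))" unfolding r_def
        unfolding lf_sum[OF lf] using lf_basic(3)[OF lf] by simp
      also have "\<dots> = 0" using L3[OF _ f(1)] by (intro sum.neutral) simp
      finally have "f (e + r) = f e" using lf_basic(4)[OF lf] by simp
      moreover have "\<bar>f (e + r)\<bar> \<le> norm (e + r)" using lf_basic(5)[OF lf] by blast
      ultimately show ?thesis using f split by simp
    qed
  qed
  show ?thesis using unit trunc by blast
qed



lemma sum_pad:
  fixes h :: "nat \<Rightarrow> 'b::comm_monoid_add"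
  assumes "\<And>i. N1 \<le> i \<Longrightarrow> h i = 0" "N1 \<le> N"
  shows "sum h {..<N} = sum h {..<N1}"
  by (rule sum.mono_neutral_right) (use assms in auto)

theorem theorem7:
  assumes "infinite_dimensional TYPE('a::banach)"
  shows "\<exists>K::'a set. K \<noteq> {} \<and> closed K \<and> bounded K \<and> convex K \<and> \<not> remotal K"
proof -
  obtain X :: "nat \<Rightarrow> 'a" where unit: "\<And>i. norm (X i) = 1"
    and trunc: "\<And>M N c. M \<le> N \<Longrightarrow> norm (\<Sum>i<M. c i *\<^sub>R X i) \<le> 2 * norm (\<Sum>i<N. c i *\<^sub>R X i)"
    using basic_seq[OF assms] by blast
  define a where "a i = 1 - 1 / real (i+2)" for i
  have a0: "\<And>i. 0 \<le> a i" and a1: "\<And>i. a i < 1" unfolding a_def by (auto simp: field_simps)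
  define y where "y i = a i *\<^sub>R X i" for i
  have ny: "\<And>i. norm (y i) = a i" unfolding y_def using unit a0 by simp
  define K0 where "K0 = {v. \<exists>N t. (\<forall>i. 0 \<le> t i) \<and> (\<forall>i\<ge>N. t i = 0) \<and> (\<Sum>i<N. t i) = 1 \<and> v = (\<Sum>i<N. t i *\<^sub>R y i)}"
  have nb: "\<And>N t. (\<forall>i. 0 \<le> t i) \<Longrightarrow> norm (\<Sum>i<N. t i *\<^sub>R y i) \<le> (\<Sum>i<N. t i * a i)"
  proof -
    fix N and t :: "nat \<Rightarrow> real" assume t: "\<forall>i. 0 \<le> t i"
    have "norm (\<Sum>i<N. t i *\<^sub>R y i) \<le> (\<Sum>i<N. norm (t i *\<^sub>R y i))" by (rule norm_sum)
    also have "\<dots> = (\<Sum>i<N. t i * a i)" using t ny by simp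
    finally show "norm (\<Sum>i<N. t i *\<^sub>R y i) \<le> (\<Sum>i<N. t i * a i)" .
  qed
  have K0n: "\<And>v. v \<in> K0 \<Longrightarrow> norm v \<le> 1"
  proof -
    fix v assume "v \<in> K0"
    then obtain N t where t: "\<forall>i. 0 \<le> t i" "(\<Sum>i<N. t i) = 1" "v = (\<Sum>i<N. t i *\<^sub>R y i)"
      unfolding K0_def by blast
    have "(\<Sum>i<N. t i * a i) \<le> (\<Sum>i<N. t i)"
      using t a1 by (intro sum_mono) (simp add: mult_left_le less_imp_le)
    then show "norm v \<le> 1" using nb[OF t(1), of N] t by simp
  qed
  have yK0: "\<And>n. y n \<in> K0"
  proof -
    fix n :: nat
    define t where "t i = (if i = n then 1 else (0::real))" for i
    have 1: "(\<Sum>i<Suc n. t i) = 1" unfolding t_def by simp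
    have 2: "y n = (\<Sum>i<Suc n. t i *\<^sub>R y i)" unfolding t_def by simp
    have 3: "\<forall>i. 0 \<le> t i" "\<forall>i\<ge>Suc n. t i = 0" unfolding t_def by auto
    show "y n \<in> K0" unfolding K0_def
      by (rule CollectI, rule exI[of _ "Suc n"], rule exI[of _ t]) (use 1 2 3 in blast)
  qed
  have cK0: "convex K0"
    unfolding convex_def
  proof (intro ballI allI impI)
    fix v w :: 'a and u1 u2 :: real assume v: "v \<in> K0" and w: "w \<in> K0" and u: "0 \<le> u1" "0 \<le> u2" "u1 + u2 = 1"
    obtain N1 t1 where t1: "\<forall>i. 0 \<le> t1 i" "\<forall>i\<ge>N1. t1 i = 0" "(\<Sum>i<N1. t1 i) = 1" "v = (\<Sum>i<N1. t1 i *\<^sub>R y i)"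
      using v unfolding K0_def by blast
    obtain N2 t2 where t2: "\<forall>i. 0 \<le> t2 i" "\<forall>i\<ge>N2. t2 i = 0" "(\<Sum>i<N2. t2 i) = 1" "w = (\<Sum>i<N2. t2 i *\<^sub>R y i)"
      using w unfolding K0_def by blast
    define N where "N = max N1 N2"
    define t where "t i = u1 * t1 i + u2 * t2 i" for i
    have e1: "(\<Sum>i<N. t1 i) = 1" "v = (\<Sum>i<N. t1 i *\<^sub>R y i)"
      using sum_pad[of N1 t1 N] sum_pad[of N1 "\<lambda>i. t1 i *\<^sub>R y i" N] t1 unfolding N_def by auto
    have e2: "(\<Sum>i<N. t2 i) = 1" "w = (\<Sum>i<N. t2 i *\<^sub>R y i)"
      using sum_pad[of N2 t2 N] sum_pad[of N2 "\<lambda>i. t2 i *\<^sub>R y i" N] t2 unfolding N_def by auto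
    have "\<forall>i. 0 \<le> t i" unfolding t_def using t1 t2 u by simp
    moreover have "\<forall>i\<ge>N. t i = 0" unfolding t_def N_def using t1 t2 by simp
    moreover have "(\<Sum>i<N. t i) = 1" unfolding t_def
      by (simp add: sum.distrib sum_distrib_left[symmetric] e1 e2 u)
    moreover have "u1 *\<^sub>R v + u2 *\<^sub>R w = (\<Sum>i<N. t i *\<^sub>R y i)" unfolding t_def e1 e2
      by (simp add: sum.distrib scaleR_sum_right scaleR_add_left)
    ultimately show "u1 *\<^sub>R v + u2 *\<^sub>R w \<in> K0" unfolding K0_def by blast
  qed
  define K where "K = closure K0"
  have Kn: "\<And>k. k \<in> K \<Longrightarrow> norm k < 1"
  proof (rule ccontr)
    fix k assume kK: "k \<in> K" and nk: "\<not> norm k < 1"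
    obtain w where w: "w \<in> K0" "dist w k < 1/8" using kK unfolding K_def closure_approachable
      by (meson divide_pos_pos zero_less_numeral zero_less_one)
    obtain M s where s: "\<forall>i. 0 \<le> s i" "\<forall>i\<ge>M. s i = 0" "(\<Sum>i<M. s i) = 1" "w = (\<Sum>i<M. s i *\<^sub>R y i)"
      using w unfolding K0_def by blast
    define \<delta> where "\<delta> = 1 / (8 * real (M + 2))"
    have dpos: "\<delta> > 0" unfolding \<delta>_def by simp
    have dsmall: "\<delta> \<le> 1/16" unfolding \<delta>_def by (simp add: field_simps)
    obtain v where v: "v \<in> K0" "dist v k < \<delta>" using kK dpos unfolding K_def closure_approachable by blast
    obtain N1 t where t: "\<forall>i. 0 \<le> t i" "\<forall>i\<ge>N1. t i = 0" "(\<Sum>i<N1. t i) = 1" "v = (\<Sum>i<N1. t i *\<^sub>R y i)"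
      using v unfolding K0_def by blast
    define N where "N = max N1 M"
    have MN: "M \<le> N" unfolding N_def by simp
    have tN: "(\<Sum>i<N. t i) = 1" "v = (\<Sum>i<N. t i *\<^sub>R y i)"
      using sum_pad[of N1 t N] sum_pad[of N1 "\<lambda>i. t i *\<^sub>R y i" N] t unfolding N_def by auto
    have sN: "w = (\<Sum>i<N. s i *\<^sub>R y i)"
      using sum_pad[of M "\<lambda>i. s i *\<^sub>R y i" N] s MN by auto
    define T where "T = (\<Sum>i<M. t i *\<^sub>R y i)"
    define c where "c i = (t i - s i) * a i" for i
    have cN: "(\<Sum>i<N. c i *\<^sub>R X i) = v - w"
      unfolding tN sN c_def y_def by (simp add: sum_subtractf[symmetric] algebra_simps)
    have cM: "(\<Sum>i<M. c i *\<^sub>R X i) = T - w"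
      unfolding T_def s c_def y_def by (simp add: sum_subtractf[symmetric] algebra_simps)
    have Tw: "norm (T - w) \<le> 2 * norm (v - w)" using trunc[OF MN, of c] cN cM by simp
    have nT: "norm T \<le> (\<Sum>i<M. t i)"
    proof -
      have "norm T \<le> (\<Sum>i<M. t i * a i)" unfolding T_def using nb t(1) by blast
      also have "\<dots> \<le> (\<Sum>i<M. t i)" using t a1 by (intro sum_mono) (simp add: mult_left_le less_imp_le)
      finally show ?thesis .
    qed
    define b where "b i = (if i < M then 1 / real (M+2) else 0)" for i
    have ab: "\<And>i. a i \<le> 1 - b i"
    proof -
      fix i :: nat show "a i \<le> 1 - b i"
      proof (cases "i < M")
        case True
        then have "real (i+2) \<le> real (M+2)" by simp
        then have "1 / real (M+2) \<le> 1 / real (i+2)" by (intro divide_left_mono) auto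
        then show ?thesis unfolding a_def b_def using True by simp
      next
        case False then show ?thesis unfolding b_def using a1[of i] by simp
      qed
    qed
    have "norm v \<le> (\<Sum>i<N. t i * a i)" using nb t(1) tN by simp
    also have "\<dots> \<le> (\<Sum>i<N. t i * (1 - b i))" using t ab by (intro sum_mono mult_left_mono) auto
    also have "\<dots> = 1 - (\<Sum>i<N. t i * b i)" using tN by (simp add: algebra_simps sum_subtractf)
    also have "(\<Sum>i<N. t i * b i) = (\<Sum>i<M. t i * b i)"
      using sum_pad[of M "\<lambda>i. t i * b i" N] MN unfolding b_def by simp
    also have "\<dots> = (\<Sum>i<M. t i) / real (M+2)"
      unfolding b_def by (simp add: sum_divide_distrib)
    finally have "(\<Sum>i<M. t i) \<le> real (M+2) * (1 - norm v)" by (simp add: field_simps)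
    also have "1 - norm v \<le> \<delta>"
      using v nk norm_triangle_ineq3[of k v] by (simp add: dist_norm norm_minus_commute)
    then have "real (M+2) * (1 - norm v) \<le> real (M+2) * \<delta>" by (intro mult_left_mono) auto
    also have "real (M+2) * \<delta> = 1/8" unfolding \<delta>_def by simp
    finally have st: "(\<Sum>i<M. t i) \<le> 1/8" .
    have "norm (v - w) \<le> dist v k + dist w k"
      using norm_triangle_ineq[of "v - k" "k - w"] by (simp add: dist_norm norm_minus_commute)
    then have vw: "norm (v - w) \<le> 3/16" using v w dsmall by simp
    have "norm w \<le> norm T + norm (T - w)" using norm_triangle_ineq4[of T "T - w"] by simp
    then have "norm w \<le> 1/8 + 3/8" using nT st Tw vw by simp
    moreover have "norm k \<le> norm w + dist w k" using norm_triangle_ineq[of w "k - w"]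
      by (simp add: dist_norm norm_minus_commute)
    ultimately show False using nk w by simp
  qed
  have Kne: "K \<noteq> {}" unfolding K_def using yK0 closure_subset by blast
  have Kb: "bounded K" unfolding K_def
    using K0n by (intro bounded_closure) (auto simp: bounded_iff)
  have Kc: "closed K" unfolding K_def by simp
  have Kcv: "convex K" unfolding K_def using cK0 by (rule convex_closure)
  have fd: "farthest_dist 0 K = 1"
  proof -
    have bdd: "bdd_above ((\<lambda>c. norm (0 - c)) ` K)" using Kn by (intro bdd_aboveI[of _ 1]) force
    have le: "farthest_dist 0 K \<le> 1" unfolding farthest_dist_def
      using Kne Kn by (intro cSUP_least) (auto intro: less_imp_le)
    have ge: "\<And>n. a n \<le> farthest_dist 0 K" unfolding farthest_dist_def
    proof -
      fix n :: nat
      have "y n \<in> K" unfolding K_def using yK0 closure_subset by blast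
      then have "norm (0 - y n) \<le> (SUP c\<in>K. norm (0 - c))" using bdd by (intro cSUP_upper) auto
      then show "a n \<le> (SUP c\<in>K. norm (0 - c))" using ny by simp
    qed
    show ?thesis
    proof (rule ccontr)
      assume "farthest_dist 0 K \<noteq> 1"
      then have lt: "farthest_dist 0 K < 1" using le by simp
      obtain n :: nat where n: "1 / (1 - farthest_dist 0 K) < real n" using reals_Archimedean2 by blast
      have pos: "0 < 1 - farthest_dist 0 K" using lt by simp
      have "1 < real n * (1 - farthest_dist 0 K)" using n pos by (simp add: field_simps)
      then have "1 < real (n+2) * (1 - farthest_dist 0 K)" using pos
        by (smt (verit, best) mult_right_mono of_nat_add of_nat_le_iff le_add1)
      then have "1 / real (n+2) < 1 - farthest_dist 0 K" by (simp add: field_simps)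
      then have "farthest_dist 0 K < a n" unfolding a_def by simp
      then show False using ge[of n] by simp
    qed
  qed
  have "\<not> remotal K"
    unfolding remotal_def remotal_from_def
  proof
    assume "\<forall>z. \<exists>c0\<in>K. norm (z - c0) = farthest_dist z K"
    then obtain c0 where "c0 \<in> K" "norm (0 - c0) = farthest_dist 0 K" by blast
    then show False using Kn[of c0] fd by simp
  qed
  then show ?thesis using Kne Kb Kc Kcv by blast
qed


end
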